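(* Let $X$ be an exponential vector space over a field $K$. Then $X\smallsetminus X_0$ has a basis if and only if the feasible set $Q(X)$ generates $X\smallsetminus X_0$.
   Context: An exponential vector space (evs) over a field $K$ is a partially ordered set $(X,\leq)$ with a binary operation $+$ on $X$ and a map $K\times X\to X$, $(\alpha,x)\mapsto \alpha x$, such that: (A1) $(X,+)$ is a commutative semigroup with identity $\theta$; (A2) $x\leq y$ implies $x+z\leq y+z$ and $\alpha x\leq \alpha y$ for all $z\in X$, $\alpha\in K$; (A3) $\alpha(x+y)=\alpha x+\alpha y$, $\alpha(\beta x)=(\alpha\beta)x$, $(\alpha+\beta)x\leq \alpha x+\beta x$, $1x=x$; (A4) $\alpha x=\theta$ iff $\alpha=0$ or $x=\theta$; (A5) $x+(-1)x=\theta$ iff $x\in X_0$, where $X_0:=\{z\in X: y\not\leq z \text{ for all } y\in X\smallsetminus\{z\}\}$ (the set of minimal elements, called the primitive space; it is a vector space over $K$); (A6) for each $x\in X$ there is $p\in X_0$ with $p\leq x$. For $x\in X\smallsetminus X_0$ let $L(x):=\{z\in X: z\geq \alpha x+p \text{ for some } \alpha\in K\smallsetminus\{0\},\ p\in X_0\}$. A subset $B\subseteq X\smallsetminus X_0$ generates $X\smallsetminus X_0$ if $X\smallsetminus X_0=\bigcup_{b\in B}L(b)$. Elements $x,y\in X\smallsetminus X_0$ are orderly dependent if $x\in L(y)$ or $y\in L(x)$, and orderly independent otherwise; $B\subseteq X\smallsetminus X_0$ is orderly independent if any two distinct members of $B$ are orderly independent. A basis of $X\smallsetminus X_0$ is an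 orderly independent subset of $X\smallsetminus X_0$ that generates $X\smallsetminus X_0$. For $x\in X$ write $\downarrow x:=\{z\in X: z\leq x\}$. The feasible set is $Q(X):=\{x\in X\smallsetminus X_0: (\downarrow x\smallsetminus X_0)\subseteq L(x)\}$. *)

theory Defs
  imports Main
begin

definition primitive :: "('x \<Rightarrow> 'x \<Rightarrow> bool) \<Rightarrow> 'x set" where
  "primitive le = {z. \<forall>y. y \<noteq> z \<longrightarrow> \<not> le y z}"

definition evs :: "('x \<Rightarrow> 'x \<Rightarrow> bool) \<Rightarrow> ('x \<Rightarrow> 'x \<Rightarrow> 'x) \<Rightarrow> 'x
    \<Rightarrow> ('k::field \<Rightarrow> 'x \<Rightarrow> 'x) \<Rightarrow> bool" where
  "evs le add th sm \<longleftrightarrow>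
     (\<forall>x. le x x) \<and> (\<forall>x y. le x y \<and> le y x \<longrightarrow> x = y) \<and>
     (\<forall>x y z. le x y \<and> le y z \<longrightarrow> le x z) \<and>
     (\<forall>x y z. add (add x y) z = add x (add y z)) \<and>
     (\<forall>x y. add x y = add y x) \<and>
     (\<forall>x. add x th = x) \<and>
     (\<forall>x y z a. le x y \<longrightarrow> le (add x z) (add y z) \<and> le (sm a x) (sm a y)) \<and>
     (\<forall>a x y. sm a (add x y) = add (sm a x) (sm a y)) \<and>
     (\<forall>a b x. sm a (sm b x) = sm (a * b) x) \<and>
     (\<forall>a b x. le (sm (a + b) x) (add (sm a x) (sm b x))) \<and>
     (\<forall>x. sm 1 x = x) \<and>
     (\<forall>a x. sm a x = th \<longleftrightarrow> a = 0 \<or> x = th) \<and>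
     (\<forall>x. add x (sm (-1) x) = th \<longleftrightarrow> x \<in> primitive le) \<and>
     (\<forall>x. \<exists>p\<in>primitive le. le p x)"

definition Lset :: "('x \<Rightarrow> 'x \<Rightarrow> bool) \<Rightarrow> ('x \<Rightarrow> 'x \<Rightarrow> 'x)
    \<Rightarrow> ('k::field \<Rightarrow> 'x \<Rightarrow> 'x) \<Rightarrow> 'x \<Rightarrow> 'x set" where
  "Lset le add sm x = {z. \<exists>a p. a \<noteq> 0 \<and> p \<in> primitive le \<and> le (add (sm a x) p) z}"

definition generates :: "('x \<Rightarrow> 'x \<Rightarrow> bool) \<Rightarrow> ('x \<Rightarrow> 'x \<Rightarrow> 'x)
    \<Rightarrow> ('k::field \<Rightarrow> 'x \<Rightarrow> 'x) \<Rightarrow> 'x set \<Rightarrow> bool" where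
  "generates le add sm B \<longleftrightarrow> B \<subseteq> - primitive le \<and>
     - primitive le = (\<Union>b\<in>B. Lset le add sm b)"

definition orderly_independent :: "('x \<Rightarrow> 'x \<Rightarrow> bool) \<Rightarrow> ('x \<Rightarrow> 'x \<Rightarrow> 'x)
    \<Rightarrow> ('k::field \<Rightarrow> 'x \<Rightarrow> 'x) \<Rightarrow> 'x set \<Rightarrow> bool" where
  "orderly_independent le add sm B \<longleftrightarrow> B \<subseteq> - primitive le \<and>
     (\<forall>x\<in>B. \<forall>y\<in>B. x \<noteq> y \<longrightarrow> x \<notin> Lset le add sm y \<and> y \<notin> Lset le add sm x)"

definition is_basis :: "('x \<Rightarrow> 'x \<Rightarrow> bool) \<Rightarrow> ('x \<Rightarrow> 'x \<Rightarrow> 'x)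
    \<Rightarrow> ('k::field \<Rightarrow> 'x \<Rightarrow> 'x) \<Rightarrow> 'x set \<Rightarrow> bool" where
  "is_basis le add sm B \<longleftrightarrow> orderly_independent le add sm B \<and> generates le add sm B"

definition feasible :: "('x \<Rightarrow> 'x \<Rightarrow> bool) \<Rightarrow> ('x \<Rightarrow> 'x \<Rightarrow> 'x)
    \<Rightarrow> ('k::field \<Rightarrow> 'x \<Rightarrow> 'x) \<Rightarrow> 'x set" where
  "feasible le add sm = {x. x \<notin> primitive le \<and>
     {z. le z x} - primitive le \<subseteq> Lset le add sm x}"

end

theory Submission
  imports Defs
begin

locale evsl =
  fixes le :: "'x \<Rightarrow> 'x \<Rightarrow> bool" and add :: "'x \<Rightarrow> 'x \<Rightarrow> 'x" and th :: 'x
    and sm :: "'k::field \<Rightarrow> 'x \<Rightarrow> 'x"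
  assumes ev: "evs le add th sm"
begin

abbreviation "P \<equiv> primitive le"
abbreviation "L \<equiv> Lset le add sm"

lemma refl: "le x x" using ev[unfolded evs_def, THEN conjunct1] by (simp only:)
lemma trans: "le x y \<Longrightarrow> le y z \<Longrightarrow> le x z" using ev[unfolded evs_def, THEN conjunct2, THEN conjunct2, THEN conjunct1] by blast
lemma assoc: "add (add x y) z = add x (add y z)" using ev[unfolded evs_def, THEN conjunct2, THEN conjunct2, THEN conjunct2, THEN conjunct1] by (simp only:)
lemma comm: "add x y = add y x" using ev[unfolded evs_def, THEN conjunct2, THEN conjunct2, THEN conjunct2, THEN conjunct2, THEN conjunct1] by (simp only:)
lemma unit: "add x th = x" using ev[unfolded evs_def, THEN conjunct2, THEN conjunct2, THEN conjunct2, THEN conjunct2, THEN conjunct2, THEN conjunct1] by (simp only:)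
lemma mono_add: "le x y \<Longrightarrow> le (add x z) (add y z)" using ev[unfolded evs_def, THEN conjunct2, THEN conjunct2, THEN conjunct2, THEN conjunct2, THEN conjunct2, THEN conjunct2, THEN conjunct1] by blast
lemma mono_sm: "le x y \<Longrightarrow> le (sm a x) (sm a y)" using ev[unfolded evs_def, THEN conjunct2, THEN conjunct2, THEN conjunct2, THEN conjunct2, THEN conjunct2, THEN conjunct2, THEN conjunct1] by blast
lemma sm_add: "sm a (add x y) = add (sm a x) (sm a y)" using ev[unfolded evs_def, THEN conjunct2, THEN conjunct2, THEN conjunct2, THEN conjunct2, THEN conjunct2, THEN conjunct2, THEN conjunct2, THEN conjunct1] by (simp only:)
lemma sm_sm: "sm a (sm b x) = sm (a * b) x" using ev[unfolded evs_def, THEN conjunct2, THEN conjunct2, THEN conjunct2, THEN conjunct2, THEN conjunct2, THEN conjunct2, THEN conjunct2, THEN conjunct2, THEN conjunct1] by (simp only:)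
lemma sm_one: "sm 1 x = x" using ev[unfolded evs_def, THEN conjunct2, THEN conjunct2, THEN conjunct2, THEN conjunct2, THEN conjunct2, THEN conjunct2, THEN conjunct2, THEN conjunct2, THEN conjunct2, THEN conjunct2, THEN conjunct1] by (simp only:)
lemma sm_th: "sm a x = th \<longleftrightarrow> a = 0 \<or> x = th" using ev[unfolded evs_def, THEN conjunct2, THEN conjunct2, THEN conjunct2, THEN conjunct2, THEN conjunct2, THEN conjunct2, THEN conjunct2, THEN conjunct2, THEN conjunct2, THEN conjunct2, THEN conjunct2, THEN conjunct1] by (simp only:)
lemma prim_iff: "add x (sm (-1) x) = th \<longleftrightarrow> x \<in> P" using ev[unfolded evs_def, THEN conjunct2, THEN conjunct2, THEN conjunct2, THEN conjunct2, THEN conjunct2, THEN conjunct2, THEN conjunct2, THEN conjunct2, THEN conjunct2, THEN conjunct2, THEN conjunct2, THEN conjunct2, THEN conjunct1] by (simp only:)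

lemma th_prim: "th \<in> P"
  using prim_iff[of th] sm_th[of "-1" th] unit by simp

lemma prim_add: assumes "p \<in> P" "q \<in> P" shows "add p q \<in> P"
proof -
  have "add (add p q) (sm (-1) (add p q)) = add (add p (sm (-1) p)) (add q (sm (-1) q))"
  proof -
    have i: "add q (add (sm (-1) p) (sm (-1) q)) = add (sm (-1) p) (add q (sm (-1) q))"
      by (metis assoc comm)
    have "add (add p q) (sm (-1) (add p q)) = add (add p q) (add (sm (-1) p) (sm (-1) q))"
      by (simp add: sm_add)
    also have "\<dots> = add p (add q (add (sm (-1) p) (sm (-1) q)))" by (simp add: assoc)
    also have "\<dots> = add p (add (sm (-1) p) (add q (sm (-1) q)))" by (simp only: i)
    finally show ?thesis by (simp add: assoc)
  qed
  also have "\<dots> = th"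
  proof -
    have "add p (sm (-1) p) = th" "add q (sm (-1) q) = th" using assms prim_iff by blast+
    thus ?thesis by (simp add: unit)
  qed
  finally show ?thesis using prim_iff by blast
qed

lemma prim_sm: assumes "p \<in> P" shows "sm a p \<in> P"
proof -
  have "sm (-1) (sm a p) = sm a (sm (-1) p)" by (simp add: sm_sm mult.commute)
  hence "add (sm a p) (sm (-1) (sm a p)) = sm a (add p (sm (-1) p))" by (simp add: sm_add)
  also have "\<dots> = th" using assms prim_iff sm_th by simp
  finally show ?thesis using prim_iff by blast
qed

lemma prim_min: "p \<in> P \<Longrightarrow> le y p \<Longrightarrow> y = p"
  unfolding primitive_def by blast

lemma self_L: "x \<in> L x"
proof -
  have "le (add (sm 1 x) th) x" using sm_one unit refl by simp
  thus ?thesis unfolding Lset_def using th_prim by (intro CollectI exI[of _ 1] exI[of _ th]) simp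
qed

lemma L_up: "z \<in> L x \<Longrightarrow> le z w \<Longrightarrow> w \<in> L x"
  unfolding Lset_def using trans by blast

lemma L_trans: assumes "y \<in> L x" "z \<in> L y" shows "z \<in> L x"
proof -
  obtain a p where a: "a \<noteq> 0" "p \<in> P" "le (add (sm a x) p) y" using assms(1) unfolding Lset_def by blast
  obtain b q where b: "b \<noteq> 0" "q \<in> P" "le (add (sm b y) q) z" using assms(2) unfolding Lset_def by blast
  have "le (sm b (add (sm a x) p)) (sm b y)" using a mono_sm by blast
  hence "le (add (sm b (add (sm a x) p)) q) (add (sm b y) q)" using mono_add by blast
  hence "le (add (sm b (add (sm a x) p)) q) z" using b trans by blast
  moreover have "add (sm b (add (sm a x) p)) q = add (sm (b*a) x) (add (sm b p) q)"
    by (simp add: sm_add sm_sm assoc)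
  ultimately have "le (add (sm (b*a) x) (add (sm b p) q)) z" by simp
  moreover have "add (sm b p) q \<in> P" using a b prim_sm prim_add by blast
  moreover have "b * a \<noteq> 0" using a b by simp
  ultimately show ?thesis unfolding Lset_def by blast
qed

lemma cancel: assumes "a \<noteq> 0" "p \<in> P"
  shows "add (sm (inverse a) (add (sm a y) p)) (sm (- inverse a) p) = y"
proof -
  have "sm (inverse a) (add (sm a y) p) = add y (sm (inverse a) p)"
    using assms by (simp add: sm_add sm_sm sm_one)
  moreover have "sm (- inverse a) p = sm (-1) (sm (inverse a) p)" by (simp add: sm_sm)
  moreover have "add (sm (inverse a) p) (sm (-1) (sm (inverse a) p)) = th"
    using prim_sm assms prim_iff by blast
  ultimately show ?thesis by (simp add: assoc unit)
qed

lemma back_L: assumes "a \<noteq> 0" "p \<in> P" shows "y \<in> L (add (sm a y) p)"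
proof -
  have "le (add (sm (inverse a) (add (sm a y) p)) (sm (- inverse a) p)) y"
    using cancel[OF assms, of y] refl by simp
  moreover have "sm (- inverse a) p \<in> P" using prim_sm assms by blast
  moreover have "inverse a \<noteq> 0" using assms by simp
  ultimately show ?thesis unfolding Lset_def by blast
qed

lemma back_prim: assumes "a \<noteq> 0" "p \<in> P" "add (sm a y) p \<in> P" shows "y \<in> P"
proof -
  have "add (sm (inverse a) (add (sm a y) p)) (sm (- inverse a) p) \<in> P"
    using assms prim_sm prim_add by blast
  thus ?thesis using cancel[OF assms(1,2), of y] by simp
qed

lemma L_noprim: assumes "q \<notin> P" "z \<in> L q" shows "z \<notin> P"
proof
  assume z: "z \<in> P"
  obtain a p where a: "a \<noteq> 0" "p \<in> P" "le (add (sm a q) p) z" using assms(2) unfolding Lset_def by blast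
  hence "add (sm a q) p = z" using prim_min z by blast
  thus False using back_prim a z assms(1) by blast
qed

lemma Q_sym: assumes "x \<in> feasible le add sm" "y \<in> feasible le add sm" "x \<in> L y"
  shows "y \<in> L x"
proof -
  obtain a p where a: "a \<noteq> 0" "p \<in> P" "le (add (sm a y) p) x" using assms(3) unfolding Lset_def by blast
  have yP: "y \<notin> P" using assms(2) unfolding feasible_def by blast
  have "add (sm a y) p \<notin> P" using back_prim a yP by blast
  hence "add (sm a y) p \<in> L x" using assms(1) a unfolding feasible_def by blast
  thus ?thesis using back_L[OF a(1,2), of y] L_trans by blast
qed

end

theorem mainTheorem5:
  fixes le :: "'x \<Rightarrow> 'x \<Rightarrow> bool" and add :: "'x \<Rightarrow> 'x \<Rightarrow> 'x" and th :: 'x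
    and sm :: "'k::field \<Rightarrow> 'x \<Rightarrow> 'x"
  assumes "evs le add th sm"
  shows "(\<exists>B. is_basis le add sm B) \<longleftrightarrow> generates le add sm (feasible le add sm)"
proof -
  interpret evsl le add th sm using assms by unfold_locales
  define Q where "Q = feasible le add sm"
  have QnP: "Q \<subseteq> - P" unfolding Q_def feasible_def by blast
  have Lsub: "(\<Union>b\<in>S. L b) \<subseteq> - P" if "S \<subseteq> - P" for S using that L_noprim by blast
  show ?thesis
  proof
    assume "\<exists>B. is_basis le add sm B"
    then obtain B where B: "orderly_independent le add sm B" "generates le add sm B"
      unfolding is_basis_def by blast
    have BQ: "B \<subseteq> Q"
    proof
      fix b assume b: "b \<in> B"
      have "b \<notin> P" using B b unfolding generates_def by blast
      moreover have "w \<in> L b" if w: "le w b" "w \<notin> P" for w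
      proof -
        obtain b' where b': "b' \<in> B" "w \<in> L b'" using B(2) w(2) unfolding generates_def by blast
        have "b \<in> L b'" using L_up b' w by blast
        hence "b = b'" using B(1) b b' unfolding orderly_independent_def by blast
        thus ?thesis using b' by simp
      qed
      ultimately show "b \<in> Q" unfolding Q_def feasible_def by blast
    qed
    have "- P \<subseteq> (\<Union>b\<in>Q. L b)" using B(2) BQ unfolding generates_def by blast
    thus "generates le add sm (feasible le add sm)"
      using QnP Lsub[OF QnP] unfolding generates_def Q_def by blast
  next
    assume G: "generates le add sm (feasible le add sm)"
    define R where "R q = {r. r \<in> Q \<and> r \<in> L q \<and> q \<in> L r}" for q
    define f where "f q = (SOME r. r \<in> R q)" for q
    have fR: "f q \<in> R q" if "q \<in> Q" for q
      unfolding f_def by (rule someI[of _ q]) (use that self_L in \<open>simp add: R_def\<close>)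
    define B where "B = f ` Q"
    have BQ: "B \<subseteq> Q" using fR unfolding B_def R_def by blast
    have BnP: "B \<subseteq> - P" using BQ QnP by blast
    have gen: "generates le add sm B"
      unfolding generates_def
    proof (intro conjI BnP equalityI)
      show "- P \<subseteq> (\<Union>b\<in>B. L b)"
      proof
        fix z assume "z \<in> - P"
        then obtain q where q: "q \<in> Q" "z \<in> L q" using G unfolding generates_def Q_def by blast
        have "q \<in> L (f q)" "f q \<in> B" using fR[OF q(1)] q(1) unfolding R_def B_def by auto
        thus "z \<in> (\<Union>b\<in>B. L b)" using q L_trans by blast
      qed
      show "(\<Union>b\<in>B. L b) \<subseteq> - P" using Lsub[OF BnP] .
    qed
    have ind: "orderly_independent le add sm B"
      unfolding orderly_independent_def
    proof (rule conjI[OF BnP], intro ballI impI)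
      fix x y assume x: "x \<in> B" and y: "y \<in> B" and ne: "x \<noteq> y"
      obtain qx where qx: "qx \<in> Q" "x = f qx" using x B_def by blast
      obtain qy where qy: "qy \<in> Q" "y = f qy" using y B_def by blast
      have eq: "R qx = R qy" if dep: "x \<in> L y" "y \<in> L x"
      proof -
        have a: "x \<in> L qx" "qx \<in> L x" "y \<in> L qy" "qy \<in> L y"
          using fR[OF qx(1)] fR[OF qy(1)] qx qy unfolding R_def by auto
        have "qx \<in> L qy" using a dep L_trans by blast
        moreover have "qy \<in> L qx" using a dep L_trans by blast
        ultimately show ?thesis unfolding R_def using L_trans by blast
      qed
      have xQ: "x \<in> Q" "y \<in> Q" using x y BQ by auto
      have "\<not> (x \<in> L y \<and> y \<in> L x)"
      proof
        assume "x \<in> L y \<and> y \<in> L x"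
        hence "R qx = R qy" using eq by blast
        hence "f qx = f qy" unfolding f_def by simp
        thus False using ne qx qy by simp
      qed
      thus "x \<notin> L y \<and> y \<notin> L x" using Q_sym xQ unfolding Q_def by blast
    qed
    show "\<exists>B. is_basis le add sm B" using gen ind unfolding is_basis_def by blast
  qed
qed

end
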